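(* Let $\Omega\subsetneq\mathbb{R}^{2n+1}$ be a nonempty open convex set (convex in the Euclidean sense; not necessarily bounded). For $\xi\in\Omega$ let $\hat\xi\in\partial\Omega$ be a point with $|\xi-\hat\xi|=\operatorname{dist}(\xi,\partial\Omega)$ and let $\nu(\xi)=(\hat\xi-\xi)/|\hat\xi-\xi|\in\mathbb{S}^{2n}$ (a unit normal to $\partial\Omega$ at $\hat\xi$). Then for every $u\in C_0^\infty(\Omega)$, \[ \int_\Omega|\nabla_{\mathbb{H}^n}u|^2\,d\xi\ge\frac14\int_\Omega\sum_{i=1}^n\frac{\langle X_i(\xi),\nu(\xi)\rangle^2+\langle Y_i(\xi),\nu(\xi)\rangle^2}{\operatorname{dist}(\xi,\partial\Omega)^2}|u|^2\,d\xi . \]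
   Context: $\mathbb{H}^n$ is $\mathbb{R}^{2n+1}$ with points $\xi=(x,y,t)$, $x,y\in\mathbb{R}^n$, $t\in\mathbb{R}$, and Lebesgue measure. For $1\le i\le n$, $X_i=\partial_{x_i}+2y_i\partial_t$, $Y_i=\partial_{y_i}-2x_i\partial_t$, identified with their coefficient vectors in $\mathbb{R}^{2n+1}$; $\langle\cdot,\cdot\rangle$ is the Euclidean inner product. $\nabla_{\mathbb{H}^n}u=(X_1u,\dots,X_nu,Y_1u,\dots,Y_nu)$, $|\nabla_{\mathbb{H}^n}u|^2=\sum_i(|X_iu|^2+|Y_iu|^2)$. $\operatorname{dist}$ is Euclidean distance and $\mathbb{S}^{2n}$ the Euclidean unit sphere. Functions are real-valued. *)

theory Defs
  imports "HOL-Analysis.Analysis"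
begin

text \<open>Points of the Heisenberg group H^n are triples (x,y,t) with x,y in R^n, t in R.
  The product type carries the Euclidean norm/inner product of R^(2n+1).\<close>
type_synonym 'n hpt = "(real^'n) \<times> (real^'n) \<times> real"

coinductive smooth_fun :: "('a::euclidean_space \<Rightarrow> real) \<Rightarrow> bool" where
  "(\<forall>x. f differentiable (at x)) \<Longrightarrow>
   (\<forall>b\<in>Basis. smooth_fun (\<lambda>x. frechet_derivative f (at x) b)) \<Longrightarrow> smooth_fun f"

definition C0_inf :: "'a::euclidean_space set \<Rightarrow> ('a \<Rightarrow> real) \<Rightarrow> bool" where
  "C0_inf \<Omega> u \<longleftrightarrow> smooth_fun u \<and> compact (closure {x. u x \<noteq> 0})
      \<and> closure {x. u x \<noteq> 0} \<subseteq> \<Omega>"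

text \<open>The vector fields X_i = d/dx_i + 2 y_i d/dt and Y_i = d/dy_i - 2 x_i d/dt,
  as coefficient vectors.\<close>
definition Xf :: "'n::finite \<Rightarrow> 'n hpt \<Rightarrow> 'n hpt" where
  "Xf i p = (case p of (x, y, t) \<Rightarrow> (axis i 1, 0, 2 * y $ i))"

definition Yf :: "'n::finite \<Rightarrow> 'n hpt \<Rightarrow> 'n hpt" where
  "Yf i p = (case p of (x, y, t) \<Rightarrow> (0, axis i 1, - 2 * x $ i))"

definition hgrad_sq :: "('n::finite hpt \<Rightarrow> real) \<Rightarrow> 'n hpt \<Rightarrow> real" where
  "hgrad_sq u p = (\<Sum>i\<in>UNIV. (frechet_derivative u (at p) (Xf i p))\<^sup>2
                                + (frechet_derivative u (at p) (Yf i p))\<^sup>2)"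

end

theory Submission
  imports Defs
begin


lemma nn_integral_lborel_translate:
  fixes G :: "'a::euclidean_space \<Rightarrow> ennreal"
  assumes [measurable]: "G \<in> borel_measurable borel"
  shows "(\<integral>\<^sup>+x. G (x + c) \<partial>lborel) = (\<integral>\<^sup>+x. G x \<partial>lborel)"
proof -
  have "(\<integral>\<^sup>+x. G x \<partial>lborel) = (\<integral>\<^sup>+x. G x \<partial>(distr lborel borel ((+) c)))"
    by (simp add: lborel_distr_plus)
  also have "\<dots> = (\<integral>\<^sup>+x. G (c + x) \<partial>lborel)"
    by (subst nn_integral_distr) auto
  finally show ?thesis by (simp add: add.commute)
qed

lemma nn_integral_lborel_pair:
  fixes f :: "('a::euclidean_space \<times> 'b::euclidean_space) \<Rightarrow> ennreal"
  assumes [measurable]: "f \<in> borel_measurable borel"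
  shows "(\<integral>\<^sup>+p. f p \<partial>lborel) = (\<integral>\<^sup>+x. \<integral>\<^sup>+y. f (x,y) \<partial>lborel \<partial>lborel)"
proof -
  have m: "f \<in> borel_measurable (lborel \<Otimes>\<^sub>M lborel)"
    by (simp add: lborel_prod)
  show ?thesis
    using lborel.nn_integral_fst[OF m] by (simp add: lborel_prod)
qed



lemma vec_nth_measurable[measurable]: "(\<lambda>y::real^'n. y $ i) \<in> borel_measurable borel"
  by (intro borel_measurable_continuous_onI continuous_intros)

lemma meas_comp:
  assumes "continuous_on UNIV h" "G \<in> borel_measurable borel"
  shows "(\<lambda>x. G (h x)) \<in> borel_measurable borel"
  using measurable_compose[OF borel_measurable_continuous_onI[OF assms(1)] assms(2)] by (simp add: o_def)

lemma Xf_eq: "\<xi> + s *\<^sub>R Xf i \<xi> = (fst \<xi> + s *\<^sub>R axis i 1, fst (snd \<xi>), snd (snd \<xi>) + s * (2 * fst (snd \<xi>) $ i))"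
  by (cases \<xi>) (auto simp: Xf_def)

lemma Yf_eq: "\<xi> + s *\<^sub>R Yf i \<xi> = (fst \<xi>, fst (snd \<xi>) + s *\<^sub>R axis i 1, snd (snd \<xi>) - s * (2 * fst \<xi> $ i))"
  by (cases \<xi>) (auto simp: Yf_def)

lemma presX:
  fixes G :: "'n::finite hpt \<Rightarrow> ennreal"
  assumes [measurable]: "G \<in> borel_measurable borel"
  shows "(\<integral>\<^sup>+\<xi>. G (\<xi> + s *\<^sub>R Xf i \<xi>) \<partial>lborel) = (\<integral>\<^sup>+\<xi>. G \<xi> \<partial>lborel)"
proof -
  define e :: "real^'n" where "e = s *\<^sub>R axis i 1"
  have "(\<integral>\<^sup>+\<xi>. G (\<xi> + s *\<^sub>R Xf i \<xi>) \<partial>lborel)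
      = (\<integral>\<^sup>+\<xi>. G (fst \<xi> + e, fst (snd \<xi>), snd (snd \<xi>) + s * (2 * fst (snd \<xi>) $ i)) \<partial>lborel)"
    by (simp add: Xf_eq e_def)
  also have "\<dots> = (\<integral>\<^sup>+x. \<integral>\<^sup>+p. G (x + e, fst p, snd p + s * (2 * fst p $ i)) \<partial>lborel \<partial>lborel)"
    by (subst nn_integral_lborel_pair) (auto intro!: meas_comp[OF _ assms] continuous_intros)
  also have "\<dots> = (\<integral>\<^sup>+x. \<integral>\<^sup>+p. G (x + e, p) \<partial>lborel \<partial>lborel)"
  proof (rule nn_integral_cong)
    fix x :: "real^'n"
    have "(\<integral>\<^sup>+p. G (x + e, fst p, snd p + s * (2 * fst p $ i)) \<partial>lborel)
        = (\<integral>\<^sup>+y. \<integral>\<^sup>+t. G (x + e, y, t + s * (2 * y $ i)) \<partial>lborel \<partial>lborel)"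
      by (subst nn_integral_lborel_pair) (auto intro!: meas_comp[OF _ assms] continuous_intros)
    also have "\<dots> = (\<integral>\<^sup>+y. \<integral>\<^sup>+t. G (x + e, y, t) \<partial>lborel \<partial>lborel)"
      by (intro nn_integral_cong nn_integral_lborel_translate[where G="\<lambda>t. G (x + e, _, t)"]) auto
    also have "\<dots> = (\<integral>\<^sup>+p. G (x + e, p) \<partial>lborel)"
      by (subst nn_integral_lborel_pair[where f="\<lambda>p. G (x + e, p)"]) auto
    finally show "(\<integral>\<^sup>+p. G (x + e, fst p, snd p + s * (2 * fst p $ i)) \<partial>lborel) = (\<integral>\<^sup>+p. G (x + e, p) \<partial>lborel)" .
  qed
  also have "\<dots> = (\<integral>\<^sup>+x. \<integral>\<^sup>+p. G (x, p) \<partial>lborel \<partial>lborel)"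
    by (rule nn_integral_lborel_translate[where G="\<lambda>x. \<integral>\<^sup>+p. G (x, p) \<partial>lborel"]) measurable
  also have "\<dots> = (\<integral>\<^sup>+\<xi>. G \<xi> \<partial>lborel)"
    by (subst nn_integral_lborel_pair[where f=G]) auto
  finally show ?thesis .
qed

lemma presY:
  fixes G :: "'n::finite hpt \<Rightarrow> ennreal"
  assumes [measurable]: "G \<in> borel_measurable borel"
  shows "(\<integral>\<^sup>+\<xi>. G (\<xi> + s *\<^sub>R Yf i \<xi>) \<partial>lborel) = (\<integral>\<^sup>+\<xi>. G \<xi> \<partial>lborel)"
proof -
  have "(\<integral>\<^sup>+\<xi>. G (\<xi> + s *\<^sub>R Yf i \<xi>) \<partial>lborel)
      = (\<integral>\<^sup>+\<xi>. G (fst \<xi>, snd \<xi> + (s *\<^sub>R axis i 1, - (s * (2 * fst \<xi> $ i))))  \<partial>lborel)"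
    by (intro nn_integral_cong) (auto simp: Yf_def split: prod.splits)
  also have "\<dots> = (\<integral>\<^sup>+x. \<integral>\<^sup>+p. G (x, p + (s *\<^sub>R axis i 1, - (s * (2 * x $ i)))) \<partial>lborel \<partial>lborel)"
    by (subst nn_integral_lborel_pair) (auto intro!: meas_comp[OF _ assms] continuous_intros)
  also have "\<dots> = (\<integral>\<^sup>+x. \<integral>\<^sup>+p. G (x, p) \<partial>lborel \<partial>lborel)"
    by (intro nn_integral_cong nn_integral_lborel_translate[where G="\<lambda>p. G (_, p)"]) auto
  also have "\<dots> = (\<integral>\<^sup>+\<xi>. G \<xi> \<partial>lborel)"
    by (subst nn_integral_lborel_pair[where f=G]) auto
  finally show ?thesis .
qed



lemma fst_borel_meas[measurable]: "fst \<in> borel_measurable (borel :: ('a::euclidean_space \<times> 'b::euclidean_space) measure)"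
  by (intro borel_measurable_continuous_onI continuous_intros)
lemma snd_borel_meas[measurable]: "snd \<in> borel_measurable (borel :: ('a::euclidean_space \<times> 'b::euclidean_space) measure)"
  by (intro borel_measurable_continuous_onI continuous_intros)

lemma meas_pair_lborel:
  fixes f :: "('a::euclidean_space \<times> 'b::euclidean_space) \<Rightarrow> ennreal"
  assumes "f \<in> borel_measurable borel"
  shows "f \<in> borel_measurable (lborel \<Otimes>\<^sub>M lborel)"
  using assms by (simp add: lborel_prod)

lemma line_fubini:
  fixes V :: "'a::euclidean_space \<Rightarrow> 'a" and c :: "'a \<Rightarrow> real" and F :: "'a \<Rightarrow> ennreal"
  assumes Vc: "continuous_on UNIV V" and cc: "continuous_on UNIV c"
    and cs: "\<And>\<xi> s. c (\<xi> + s *\<^sub>R V \<xi>) = c \<xi> + s"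
    and pres: "\<And>s G. G \<in> borel_measurable borel \<Longrightarrow> (\<integral>\<^sup>+\<xi>. G (\<xi> + s *\<^sub>R V \<xi>) \<partial>lborel) = (\<integral>\<^sup>+\<xi>. G \<xi> \<partial>lborel)"
    and F[measurable]: "F \<in> borel_measurable borel"
  shows "(\<integral>\<^sup>+\<xi>. F \<xi> \<partial>lborel) = (\<integral>\<^sup>+w. \<integral>\<^sup>+s. indicator {0..<1} (c w) * F (w + s *\<^sub>R V w) \<partial>lborel \<partial>lborel)"
proof -
  have cm[measurable]: "c \<in> borel_measurable borel"
    by (rule borel_measurable_continuous_onI[OF cc])
  have m1: "(\<lambda>p::'a \<times> real. indicator {0..<1} (c (fst p)) * F (fst p + snd p *\<^sub>R V (fst p))) \<in> borel_measurable borel"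
  proof -
    have "(\<lambda>p::'a \<times> real. F (fst p + snd p *\<^sub>R V (fst p))) \<in> borel_measurable borel"
      by (rule meas_comp[OF _ F]) (auto intro!: continuous_intros continuous_on_compose2[OF Vc])
    moreover have "(\<lambda>p::'a \<times> real. indicator {0..<1} (c (fst p)) :: ennreal) \<in> borel_measurable borel"
    proof -
      have "(\<lambda>p::'a \<times> real. c (fst p)) \<in> borel_measurable borel"
        by (rule borel_measurable_continuous_onI) (auto intro!: continuous_intros continuous_on_compose2[OF cc])
      from measurable_compose[OF this, of "\<lambda>x. indicator {0..<1} x :: ennreal"]
      show ?thesis by simp
    qed
    ultimately show ?thesis by measurable
  qed
  have m2: "(\<lambda>p::'a \<times> real. indicator {0..<1} (c (fst p) - snd p) * F (fst p)) \<in> borel_measurable borel"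
    by measurable
  have "(\<integral>\<^sup>+w. \<integral>\<^sup>+s. indicator {0..<1} (c w) * F (w + s *\<^sub>R V w) \<partial>lborel \<partial>lborel)
      = (\<integral>\<^sup>+s. \<integral>\<^sup>+w. indicator {0..<1} (c w) * F (w + s *\<^sub>R V w) \<partial>lborel \<partial>lborel)"
    using lborel_pair.Fubini[OF meas_pair_lborel[OF m1]] by simp
  also have "\<dots> = (\<integral>\<^sup>+s. \<integral>\<^sup>+\<xi>. indicator {0..<1} (c \<xi> - s) * F \<xi> \<partial>lborel \<partial>lborel)"
  proof (rule nn_integral_cong)
    fix s :: real
    have "(\<integral>\<^sup>+w. indicator {0..<1} (c w) * F (w + s *\<^sub>R V w) \<partial>lborel)
        = (\<integral>\<^sup>+w. (\<lambda>\<xi>. indicator {0..<1} (c \<xi> - s) * F \<xi>) (w + s *\<^sub>R V w) \<partial>lborel)"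
      by (simp add: cs)
    also have "\<dots> = (\<integral>\<^sup>+\<xi>. indicator {0..<1} (c \<xi> - s) * F \<xi> \<partial>lborel)"
      by (rule pres) measurable
    finally show "(\<integral>\<^sup>+w. indicator {0..<1} (c w) * F (w + s *\<^sub>R V w) \<partial>lborel)
        = (\<integral>\<^sup>+\<xi>. indicator {0..<1} (c \<xi> - s) * F \<xi> \<partial>lborel)" .
  qed
  also have "\<dots> = (\<integral>\<^sup>+\<xi>. \<integral>\<^sup>+s. indicator {0..<1} (c \<xi> - s) * F \<xi> \<partial>lborel \<partial>lborel)"
    using lborel_pair.Fubini[OF meas_pair_lborel[OF m2]] by simp
  also have "\<dots> = (\<integral>\<^sup>+\<xi>. F \<xi> \<partial>lborel)"
  proof (rule nn_integral_cong)
    fix \<xi>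
    have "(\<integral>\<^sup>+s. indicator {0..<1} (c \<xi> - s) * F \<xi> \<partial>lborel) = (\<integral>\<^sup>+s. F \<xi> * indicator {c \<xi> - 1<..c \<xi>} s \<partial>lborel)"
      by (intro nn_integral_cong) (auto simp: indicator_def mult.commute)
    also have "\<dots> = F \<xi>"
      by (subst nn_integral_cmult_indicator) auto
    finally show "(\<integral>\<^sup>+s. indicator {0..<1} (c \<xi> - s) * F \<xi> \<partial>lborel) = F \<xi>" .
  qed
  finally show ?thesis by simp
qed

lemma line_compare:
  fixes V :: "'a::euclidean_space \<Rightarrow> 'a" and c :: "'a \<Rightarrow> real" and F L :: "'a \<Rightarrow> ennreal"
  assumes Vc: "continuous_on UNIV V" and cc: "continuous_on UNIV c"
    and cs: "\<And>\<xi> s. c (\<xi> + s *\<^sub>R V \<xi>) = c \<xi> + s"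
    and pres: "\<And>s G. G \<in> borel_measurable borel \<Longrightarrow> (\<integral>\<^sup>+\<xi>. G (\<xi> + s *\<^sub>R V \<xi>) \<partial>lborel) = (\<integral>\<^sup>+\<xi>. G \<xi> \<partial>lborel)"
    and F: "F \<in> borel_measurable borel" and L: "L \<in> borel_measurable borel"
    and le: "\<And>w. (\<integral>\<^sup>+s. F (w + s *\<^sub>R V w) \<partial>lborel) \<le> (\<integral>\<^sup>+s. L (w + s *\<^sub>R V w) \<partial>lborel)"
  shows "(\<integral>\<^sup>+\<xi>. F \<xi> \<partial>lborel) \<le> (\<integral>\<^sup>+\<xi>. L \<xi> \<partial>lborel)"
proof -
  have "\<And>w. (\<integral>\<^sup>+s. indicator {0..<1} (c w) * F (w + s *\<^sub>R V w) \<partial>lborel)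
          \<le> (\<integral>\<^sup>+s. indicator {0..<1} (c w) * L (w + s *\<^sub>R V w) \<partial>lborel)"
    using le by (auto simp: nn_integral_cmult indicator_def)
  moreover have "(\<integral>\<^sup>+\<xi>. F \<xi> \<partial>lborel) = (\<integral>\<^sup>+w. \<integral>\<^sup>+s. indicator {0..<1} (c w) * F (w + s *\<^sub>R V w) \<partial>lborel \<partial>lborel)"
    by (rule line_fubini[OF Vc cc cs _ F]) (erule pres)
  moreover have "(\<integral>\<^sup>+\<xi>. L \<xi> \<partial>lborel) = (\<integral>\<^sup>+w. \<integral>\<^sup>+s. indicator {0..<1} (c w) * L (w + s *\<^sub>R V w) \<partial>lborel \<partial>lborel)"
    by (rule line_fubini[OF Vc cc cs _ L]) (erule pres)
  ultimately show ?thesis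
    by (simp add: nn_integral_mono)
qed



lemma hardy_left:
  fixes g g' :: "real \<Rightarrow> real"
  assumes ac: "a < c" and cm: "c \<le> m"
    and dg: "\<And>s. (g has_real_derivative g' s) (at s)" and cg': "continuous_on UNIV g'"
    and g0: "g c = 0"
  shows "integral {c..m} (\<lambda>s. (g s)\<^sup>2 / (4*(s-a)\<^sup>2)) \<le> integral {c..m} (\<lambda>s. (g' s)\<^sup>2)"
    and "(\<lambda>s. (g s)\<^sup>2 / (4*(s-a)\<^sup>2)) integrable_on {c..m}"
    and "(\<lambda>s. (g' s)\<^sup>2) integrable_on {c..m}"
proof -
  have cg: "continuous_on UNIV g"
    using dg by (meson DERIV_continuous continuous_at_imp_continuous_on)
  have pos: "\<And>s. s \<in> {c..m} \<Longrightarrow> s - a > 0" using ac by auto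
  define h where "h s = (g s)\<^sup>2 / (2*(s-a))" for s
  define h' where "h' s = g s * g' s / (s-a) - (g s)\<^sup>2 / (2*(s-a)\<^sup>2)" for s
  have hd: "(h has_real_derivative h' s) (at s)" if "s \<in> {c..m}" for s
  proof -
    have ne: "s - a \<noteq> 0" using pos[OF that] by auto
    have alg: "\<And>d G G' :: real. d \<noteq> 0 \<Longrightarrow> ((2 * G * G') * (2*d) - G\<^sup>2 * 2) / ((2*d) * (2*d)) = G * G' / d - G\<^sup>2 / (2*d\<^sup>2)"
      by (simp add: field_simps power2_eq_square)
    have "((\<lambda>s. (g s)\<^sup>2 / (2*(s-a))) has_real_derivative ((2 * g s * g' s) * (2*(s-a)) - (g s)\<^sup>2 * 2) / ((2*(s-a)) * (2*(s-a)))) (at s)"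
      by (rule DERIV_divide) (use ne in \<open>auto intro!: derivative_eq_intros dg\<close>)
    then show ?thesis
      unfolding h_def h'_def alg[OF ne] .

  qed
  have I1: "(h' has_integral (h m - h c)) {c..m}"
  proof (rule fundamental_theorem_of_calculus[OF cm])
    fix x assume "x \<in> {c..m}"
    from has_field_derivative_at_within[OF hd[OF this]]
    show "(h has_vector_derivative h' x) (at x within {c..m})"
      by (simp add: has_real_derivative_iff_has_vector_derivative)
  qed
  have cont1: "continuous_on {c..m} (\<lambda>s. (g s)\<^sup>2 / (4*(s-a)\<^sup>2))"
    using pos assms(1) by (intro continuous_intros continuous_on_subset[OF cg]) auto
  have cont2: "continuous_on {c..m} (\<lambda>s. (g' s)\<^sup>2)"
    by (intro continuous_intros continuous_on_subset[OF cg']) auto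
  show int1: "(\<lambda>s. (g s)\<^sup>2 / (4*(s-a)\<^sup>2)) integrable_on {c..m}"
    by (rule integrable_continuous_interval[OF cont1])
  show int2: "(\<lambda>s. (g' s)\<^sup>2) integrable_on {c..m}"
    by (rule integrable_continuous_interval[OF cont2])
  have le: "h' s \<le> (g' s)\<^sup>2 - (g s)\<^sup>2 / (4*(s-a)\<^sup>2)" if "s \<in> {c..m}" for s
  proof -
    have p: "s - a > 0" using pos[OF that] .
    have alg: "\<And>d G G' :: real. d \<noteq> 0 \<Longrightarrow> G'\<^sup>2 - G\<^sup>2 / (4*d\<^sup>2) - (G * G' / d - G\<^sup>2 / (2*d\<^sup>2)) = (G' - G / (2*d))\<^sup>2"
      by (simp add: field_simps power2_eq_square)
    have "(g' s)\<^sup>2 - (g s)\<^sup>2 / (4*(s-a)\<^sup>2) - h' s = (g' s - g s / (2*(s-a)))\<^sup>2"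
      unfolding h'_def using p by (intro alg) simp
    then show ?thesis by (metis diff_ge_0_iff_ge zero_le_power2)
  qed
  have "h m - h c \<le> integral {c..m} (\<lambda>s. (g' s)\<^sup>2 - (g s)\<^sup>2 / (4*(s-a)\<^sup>2))"
    using has_integral_le[OF I1 integrable_integral[OF integrable_diff[OF int2 int1]]] le by auto
  moreover have "h m \<ge> 0" "h c = 0"
    using pos[of m] cm g0 by (auto simp: h_def)
  ultimately show "integral {c..m} (\<lambda>s. (g s)\<^sup>2 / (4*(s-a)\<^sup>2)) \<le> integral {c..m} (\<lambda>s. (g' s)\<^sup>2)"
    using integral_diff[OF int2 int1] by simp
qed

lemma hardy_right:
  fixes g g' :: "real \<Rightarrow> real"
  assumes cb: "c < b" and mc: "m \<le> c"
    and dg: "\<And>s. (g has_real_derivative g' s) (at s)" and cg': "continuous_on UNIV g'"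
    and g0: "g c = 0"
  shows "integral {m..c} (\<lambda>s. (g s)\<^sup>2 / (4*(b-s)\<^sup>2)) \<le> integral {m..c} (\<lambda>s. (g' s)\<^sup>2)"
    and "(\<lambda>s. (g s)\<^sup>2 / (4*(b-s)\<^sup>2)) integrable_on {m..c}"
    and "(\<lambda>s. (g' s)\<^sup>2) integrable_on {m..c}"
proof -
  have cg: "continuous_on UNIV g"
    using dg by (meson DERIV_continuous continuous_at_imp_continuous_on)
  have pos: "\<And>s. s \<in> {m..c} \<Longrightarrow> b - s > 0" using cb by auto
  define h where "h s = - (g s)\<^sup>2 / (2*(b-s))" for s
  define h' where "h' s = - g s * g' s / (b-s) - (g s)\<^sup>2 / (2*(b-s)\<^sup>2)" for s
  have hd: "(h has_real_derivative h' s) (at s)" if "s \<in> {m..c}" for s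
  proof -
    have ne: "b - s \<noteq> 0" using pos[OF that] by auto
    have alg: "\<And>d G G' :: real. d \<noteq> 0 \<Longrightarrow> ((- (2 * G * G')) * (2*d) - (- G\<^sup>2) * (-2)) / ((2*d) * (2*d)) = - G * G' / d - G\<^sup>2 / (2*d\<^sup>2)"
      by (simp add: field_simps power2_eq_square)
    have "((\<lambda>s. - (g s)\<^sup>2 / (2*(b-s))) has_real_derivative ((- (2 * g s * g' s)) * (2*(b-s)) - (- (g s)\<^sup>2) * (-2)) / ((2*(b-s)) * (2*(b-s)))) (at s)"
      by (rule DERIV_divide) (use ne in \<open>auto intro!: derivative_eq_intros dg\<close>)
    then show ?thesis
      unfolding h_def h'_def alg[OF ne] .

  qed
  have I1: "(h' has_integral (h c - h m)) {m..c}"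
  proof (rule fundamental_theorem_of_calculus[OF mc])
    fix x assume "x \<in> {m..c}"
    from has_field_derivative_at_within[OF hd[OF this]]
    show "(h has_vector_derivative h' x) (at x within {m..c})"
      by (simp add: has_real_derivative_iff_has_vector_derivative)
  qed
  have cont1: "continuous_on {m..c} (\<lambda>s. (g s)\<^sup>2 / (4*(b-s)\<^sup>2))"
    using pos assms(1) by (intro continuous_intros continuous_on_subset[OF cg]) auto
  have cont2: "continuous_on {m..c} (\<lambda>s. (g' s)\<^sup>2)"
    by (intro continuous_intros continuous_on_subset[OF cg']) auto
  show int1: "(\<lambda>s. (g s)\<^sup>2 / (4*(b-s)\<^sup>2)) integrable_on {m..c}"
    by (rule integrable_continuous_interval[OF cont1])
  show int2: "(\<lambda>s. (g' s)\<^sup>2) integrable_on {m..c}"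
    by (rule integrable_continuous_interval[OF cont2])
  have le: "h' s \<le> (g' s)\<^sup>2 - (g s)\<^sup>2 / (4*(b-s)\<^sup>2)" if "s \<in> {m..c}" for s
  proof -
    have p: "b - s > 0" using pos[OF that] .
    have alg: "\<And>d G G' :: real. d \<noteq> 0 \<Longrightarrow> G'\<^sup>2 - G\<^sup>2 / (4*d\<^sup>2) - (- G * G' / d - G\<^sup>2 / (2*d\<^sup>2)) = (G' + G / (2*d))\<^sup>2"
      by (simp add: field_simps power2_eq_square)
    have "(g' s)\<^sup>2 - (g s)\<^sup>2 / (4*(b-s)\<^sup>2) - h' s = (g' s + g s / (2*(b-s)))\<^sup>2"
      unfolding h'_def using p by (intro alg) simp
    then show ?thesis by (metis diff_ge_0_iff_ge zero_le_power2)
  qed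
  have "h c - h m \<le> integral {m..c} (\<lambda>s. (g' s)\<^sup>2 - (g s)\<^sup>2 / (4*(b-s)\<^sup>2))"
    using has_integral_le[OF I1 integrable_integral[OF integrable_diff[OF int2 int1]]] le by auto
  moreover have "h m \<le> 0" "h c = 0"
    using pos[of m] mc g0 by (auto simp: h_def)
  ultimately show "integral {m..c} (\<lambda>s. (g s)\<^sup>2 / (4*(b-s)\<^sup>2)) \<le> integral {m..c} (\<lambda>s. (g' s)\<^sup>2)"
    using integral_diff[OF int2 int1] by simp
qed



lemma infdist_ge_lb:
  assumes "A \<noteq> {}" "\<And>y. y \<in> A \<Longrightarrow> d \<le> dist x y"
  shows "d \<le> infdist x A"
  using assms by (simp add: infdist_notempty) (rule cINF_greatest)

lemma hardy_1d:
  fixes g g' :: "real \<Rightarrow> real" and C :: "real set"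
  assumes dg: "\<And>s. (g has_real_derivative g' s) (at s)" and cg': "continuous_on UNIV g'"
    and ac1: "a < c1" and c12: "c1 \<le> c2" and c2b: "c2 < b"
    and gz: "\<And>s. s < c1 \<or> c2 < s \<Longrightarrow> g s = 0"
    and Csep: "\<And>x. x \<in> C \<Longrightarrow> x \<le> a \<or> b \<le> x"
  shows "(\<integral>\<^sup>+s. ennreal ((g s)\<^sup>2 / (4 * (infdist s C)\<^sup>2)) \<partial>lborel)
          \<le> (\<integral>\<^sup>+s. indicator {a<..<b} s * ennreal ((g' s)\<^sup>2) \<partial>lborel)"
proof -
  have cg: "continuous_on UNIV g"
    using dg by (meson DERIV_continuous continuous_at_imp_continuous_on)
  have gm[measurable]: "g \<in> borel_measurable borel" by (rule borel_measurable_continuous_onI[OF cg])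
  have g'm[measurable]: "g' \<in> borel_measurable borel" by (rule borel_measurable_continuous_onI[OF cg'])
  define c where "c = (a + c1) / 2"
  define c' where "c' = (c2 + b) / 2"
  define mid where "mid = (a + b) / 2"
  define m where "m = max c1 (min c2 mid)"
  have cm: "c \<le> m" and mc': "m \<le> c'" and ac: "a < c" and c'b: "c' < b"
    using ac1 c12 c2b by (auto simp: c_def c'_def m_def)
  have gc: "g c = 0" using gz[of c] ac1 by (auto simp: c_def)
  have gc': "g c' = 0" using gz[of c'] c2b by (auto simp: c'_def)
  note L = hardy_left[OF ac cm dg cg' gc]
  note R = hardy_right[OF c'b mc' dg cg' gc']
  define fL where "fL s = (g s)\<^sup>2 / (4*(s-a)\<^sup>2)" for s
  define fR where "fR s = (g s)\<^sup>2 / (4*(b-s)\<^sup>2)" for s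
  have pw: "ennreal ((g s)\<^sup>2 / (4 * (infdist s C)\<^sup>2))
      \<le> ennreal (indicator {c..m} s * fL s) + ennreal (indicator {m..c'} s * fR s)" for s
  proof (cases "g s = 0 \<or> C = {}")
    case True then show ?thesis by (auto simp: infdist_def)
  next
    case False
    then have gs: "g s \<noteq> 0" and Cne: "C \<noteq> {}" by auto
    have s12: "c1 \<le> s" "s \<le> c2" using gz[of s] gs by force+
    have lb: "min (s - a) (b - s) \<le> infdist s C"
    proof (rule infdist_ge_lb[OF Cne])
      fix y assume "y \<in> C"
      from Csep[OF this] show "min (s - a) (b - s) \<le> dist s y"
        using s12 ac1 c2b by (auto simp: dist_real_def)
    qed
    show ?thesis
    proof (cases "s \<le> mid")
      case True
      have "s - a \<le> infdist s C" using lb True by (auto simp: mid_def)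
      moreover have "0 < s - a" using s12 ac1 by auto
      ultimately have "(s - a)\<^sup>2 \<le> (infdist s C)\<^sup>2" by (intro power_mono) auto
      then have "(g s)\<^sup>2 / (4 * (infdist s C)\<^sup>2) \<le> fL s"
        unfolding fL_def using \<open>0 < s - a\<close>
        by (intro frac_le) (auto simp: algebra_simps)
      moreover have "s \<in> {c..m}" using True s12 ac1 by (auto simp: c_def m_def)
      ultimately show ?thesis
        by (auto intro!: add_increasing2 ennreal_leI)
    next
      case False
      have "b - s \<le> infdist s C" using lb False by (auto simp: mid_def)
      moreover have "0 < b - s" using s12 c2b by auto
      ultimately have "(b - s)\<^sup>2 \<le> (infdist s C)\<^sup>2" by (intro power_mono) auto
      then have "(g s)\<^sup>2 / (4 * (infdist s C)\<^sup>2) \<le> fR s"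
        unfolding fR_def using \<open>0 < b - s\<close>
        by (intro frac_le) (auto simp: algebra_simps)
      moreover have "s \<in> {m..c'}" using False s12 c2b by (auto simp: c'_def m_def)
      ultimately show ?thesis
        by (auto intro!: add_increasing ennreal_leI)
    qed
  qed
  have "(\<integral>\<^sup>+s. ennreal ((g s)\<^sup>2 / (4 * (infdist s C)\<^sup>2)) \<partial>lborel)
      \<le> (\<integral>\<^sup>+s. ennreal (indicator {c..m} s * fL s) + ennreal (indicator {m..c'} s * fR s) \<partial>lborel)"
    by (rule nn_integral_mono) (rule pw)
  also have "\<dots> = (\<integral>\<^sup>+s. ennreal (indicator {c..m} s * fL s) \<partial>lborel) + (\<integral>\<^sup>+s. ennreal (indicator {m..c'} s * fR s) \<partial>lborel)"
    by (rule nn_integral_add) (auto simp: fL_def fR_def)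
  also have "\<dots> = ennreal (integral {c..m} fL) + ennreal (integral {m..c'} fR)"
  proof -
    have iL: "(fL has_integral integral {c..m} fL) {c..m}"
      using integrable_integral[OF L(2)] unfolding fL_def[abs_def] .
    have iR: "(fR has_integral integral {m..c'} fR) {m..c'}"
      using integrable_integral[OF R(2)] unfolding fR_def[abs_def] .
    show ?thesis
      using nn_integral_has_integral_lebesgue[OF _ iL] nn_integral_has_integral_lebesgue[OF _ iR]
      by (simp add: fL_def fR_def)
  qed
  also have "\<dots> \<le> ennreal (integral {c..m} (\<lambda>s. (g' s)\<^sup>2)) + ennreal (integral {m..c'} (\<lambda>s. (g' s)\<^sup>2))"
    using L(1) R(1) unfolding fL_def fR_def by (intro add_mono ennreal_leI)
  also have "\<dots> = (\<integral>\<^sup>+s. ennreal (indicator {c..m} s * (g' s)\<^sup>2) \<partial>lborel) + (\<integral>\<^sup>+s. ennreal (indicator {m..c'} s * (g' s)\<^sup>2) \<partial>lborel)"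
    using nn_integral_has_integral_lebesgue[OF _ integrable_integral[OF L(3)]]
          nn_integral_has_integral_lebesgue[OF _ integrable_integral[OF R(3)]]
    by simp
  also have "\<dots> = (\<integral>\<^sup>+s. ennreal (indicator {c..m} s * (g' s)\<^sup>2) + ennreal (indicator {m..c'} s * (g' s)\<^sup>2) \<partial>lborel)"
    by (rule nn_integral_add[symmetric]) auto
  also have "\<dots> \<le> (\<integral>\<^sup>+s. indicator {a<..<b} s * ennreal ((g' s)\<^sup>2) + indicator {m} s * ennreal ((g' s)\<^sup>2) \<partial>lborel)"
  proof (rule nn_integral_mono)
    fix s :: real
    show "ennreal (indicator {c..m} s * (g' s)\<^sup>2) + ennreal (indicator {m..c'} s * (g' s)\<^sup>2)
        \<le> indicator {a<..<b} s * ennreal ((g' s)\<^sup>2) + indicator {m} s * ennreal ((g' s)\<^sup>2)"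
      using ac c'b cm mc' by (cases "s = m") (auto simp: indicator_def)
  qed
  also have "\<dots> = (\<integral>\<^sup>+s. indicator {a<..<b} s * ennreal ((g' s)\<^sup>2) \<partial>lborel) + (\<integral>\<^sup>+s. indicator {m} s * ennreal ((g' s)\<^sup>2) \<partial>lborel)"
    by (rule nn_integral_add) auto
  also have "(\<integral>\<^sup>+s. indicator {m} s * ennreal ((g' s)\<^sup>2) \<partial>lborel) = 0"
    using nn_integral_indicator_singleton[of m lborel "\<lambda>s. ennreal ((g' s)\<^sup>2)"]
    by (simp add: mult.commute)
  finally show ?thesis by simp
qed



definition rhoV :: "'a::real_normed_vector set \<Rightarrow> ('a \<Rightarrow> 'a) \<Rightarrow> 'a \<Rightarrow> real" where
  "rhoV \<Omega> V \<xi> = infdist 0 {s. \<xi> + s *\<^sub>R V \<xi> \<notin> \<Omega>}"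

lemma infdist_shift_real:
  fixes C :: "real set"
  shows "infdist 0 {r. s + r \<in> C} = infdist s C"
proof -
  have e: "{r. s + r \<in> C} = (\<lambda>x. x - s) ` C" by (auto simp: image_iff) (metis add_diff_cancel_left')
  show ?thesis
  proof (cases "C = {}")
    case True then show ?thesis by (simp add: infdist_def)
  next
    case False
    then have ne: "(\<lambda>x. x - s) ` C \<noteq> {}" by auto
    show ?thesis
      unfolding e infdist_notempty[OF ne] infdist_notempty[OF False]
      by (simp add: image_comp o_def dist_real_def abs_minus_commute)
  qed
qed

lemma line_hardy:
  fixes \<Omega> :: "'a::euclidean_space set" and V :: "'a \<Rightarrow> 'a" and u :: "'a \<Rightarrow> real" and Du :: "'a \<Rightarrow> 'a \<Rightarrow> real"
  assumes op: "open \<Omega>" and cv: "convex \<Omega>"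
    and du: "\<And>\<xi>. (u has_derivative Du \<xi>) (at \<xi>)"
    and cDV: "continuous_on UNIV (\<lambda>\<xi>. Du \<xi> (V \<xi>))"
    and Vinv: "\<And>\<xi> s. V (\<xi> + s *\<^sub>R V \<xi>) = V \<xi>"
    and Vne: "\<And>\<xi>. V \<xi> \<noteq> 0"
    and K: "compact K" "K \<subseteq> \<Omega>" "\<And>\<xi>. \<xi> \<notin> K \<Longrightarrow> u \<xi> = 0"
  shows "(\<integral>\<^sup>+s. indicator \<Omega> (w + s *\<^sub>R V w) * ennreal ((u (w + s *\<^sub>R V w))\<^sup>2 / (4 * (rhoV \<Omega> V (w + s *\<^sub>R V w))\<^sup>2)) \<partial>lborel)
       \<le> (\<integral>\<^sup>+s. indicator \<Omega> (w + s *\<^sub>R V w) * ennreal ((Du (w + s *\<^sub>R V w) (V (w + s *\<^sub>R V w)))\<^sup>2) \<partial>lborel)"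
proof -
  define p where "p s = w + s *\<^sub>R V w" for s
  define g where "g s = u (p s)" for s
  define g' where "g' s = Du (p s) (V w)" for s
  define C where "C = {s. p s \<notin> \<Omega>}"
  define S where "S = {s. p s \<in> K}"
  have Vp: "V (p s) = V w" for s unfolding p_def by (rule Vinv)
  have pc: "continuous_on UNIV p" unfolding p_def by (intro continuous_intros)
  have dg: "(g has_real_derivative g' s) (at s)" for s
  proof -
    have lin: "linear (Du (p s))" using du has_derivative_linear by blast
    have "((\<lambda>s. u (p s)) has_derivative (\<lambda>h. Du (p s) (h *\<^sub>R V w))) (at s)"
      unfolding p_def
      by (rule has_derivative_compose[OF _ du, of "\<lambda>s. w + s *\<^sub>R V w", unfolded o_def])
         (auto intro!: derivative_eq_intros)
    moreover have "(\<lambda>h. Du (p s) (h *\<^sub>R V w)) = (*) (g' s)"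
      using linear_scale[OF lin] by (auto simp: g'_def mult.commute)
    ultimately show ?thesis
      by (simp add: g_def[abs_def] has_field_derivative_def)
  qed
  have cg': "continuous_on UNIV g'"
  proof -
    have "g' = (\<lambda>\<xi>. Du \<xi> (V \<xi>)) \<circ> p" by (auto simp: g'_def Vp fun_eq_iff)
    then show ?thesis using continuous_on_compose[OF pc] cDV by (metis continuous_on_subset subset_UNIV)
  qed
  have rho: "rhoV \<Omega> V (p s) = infdist s C" for s
  proof -
    have pp: "p s + r *\<^sub>R V (p s) = p (s + r)" for r
      unfolding Vp by (simp add: p_def algebra_simps scaleR_left_distrib)
    have "{r. p s + r *\<^sub>R V (p s) \<notin> \<Omega>} = {r. s + r \<in> C}"
      by (simp add: C_def pp)
    then show ?thesis unfolding rhoV_def using infdist_shift_real by simp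
  qed
  have Cclosed: "closed C"
  proof -
    have "closed (p -` (- \<Omega>))" using continuous_on_closed_vimage[of UNIV p] pc op by (auto simp: closed_def)
    moreover have "C = p -` (- \<Omega>)" by (auto simp: C_def)
    ultimately show ?thesis by simp
  qed
  have LHS: "(\<integral>\<^sup>+s. indicator \<Omega> (p s) * ennreal ((u (p s))\<^sup>2 / (4 * (rhoV \<Omega> V (p s))\<^sup>2)) \<partial>lborel)
        \<le> (\<integral>\<^sup>+s. ennreal ((g s)\<^sup>2 / (4 * (infdist s C)\<^sup>2)) \<partial>lborel)"
    by (intro nn_integral_mono) (auto simp: rho g_def indicator_def)
  have RHSeq: "(\<integral>\<^sup>+s. indicator \<Omega> (p s) * ennreal ((Du (p s) (V (p s)))\<^sup>2) \<partial>lborel)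
      = (\<integral>\<^sup>+s. indicator (- C) s * ennreal ((g' s)\<^sup>2) \<partial>lborel)"
    by (intro nn_integral_cong) (auto simp: C_def g'_def Vp indicator_def)
  show ?thesis
  proof (cases "S = {}")
    case True
    then have "g s = 0" for s using K(3) by (auto simp: g_def S_def)
    then show ?thesis unfolding p_def[symmetric] using LHS by simp
  next
    case False
    have Sclosed: "closed S"
    proof -
      have "closed (p -` K)" using continuous_on_closed_vimage[of UNIV p] pc compact_imp_closed[OF K(1)] by auto
      moreover have "S = p -` K" by (auto simp: S_def)
      ultimately show ?thesis by simp
    qed
    obtain B where B: "\<And>x. x \<in> K \<Longrightarrow> norm x \<le> B" using compact_imp_bounded[OF K(1)] bounded_iff by blast
    have Sb: "bounded S"
    proof -
      have "\<bar>s\<bar> \<le> (B + norm w) / norm (V w)" if "s \<in> S" for s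
      proof -
        have "norm (p s) \<le> B" using B that by (auto simp: S_def)
        then have "\<bar>s\<bar> * norm (V w) \<le> B + norm w"
          unfolding p_def using norm_triangle_ineq4[of "w + s *\<^sub>R V w" w] by (simp add: norm_minus_commute)
        then show ?thesis using Vne[of w] by (simp add: field_simps)
      qed
      then show ?thesis unfolding bounded_iff by (auto simp: real_norm_def)
    qed
    have Sc: "compact S" using Sclosed Sb by (simp add: compact_eq_bounded_closed)
    define c1 where "c1 = Inf S"
    define c2 where "c2 = Sup S"
    have c1S: "c1 \<in> S" unfolding c1_def by (rule closed_contains_Inf[OF False _ Sclosed]) (meson Sb bounded_imp_bdd_below)
    have c2S: "c2 \<in> S" unfolding c2_def by (rule closed_contains_Sup[OF False _ Sclosed]) (meson Sb bounded_imp_bdd_above)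
    have c1le: "c1 \<le> s" if "s \<in> S" for s unfolding c1_def by (rule cInf_lower[OF that]) (meson Sb bounded_imp_bdd_below)
    have c2ge: "s \<le> c2" if "s \<in> S" for s unfolding c2_def by (rule cSup_upper[OF that]) (meson Sb bounded_imp_bdd_above)
    have c12: "c1 \<le> c2" using c1le[OF c2S] .
    have SI: "s \<notin> C" if "s \<in> S" for s using that K(2) by (auto simp: S_def C_def)
    have mid: "x \<notin> C" if "c1 \<le> x" "x \<le> c2" for x
    proof (cases "c1 = c2")
      case True then show ?thesis using that SI[OF c1S] by auto
    next
      case False
      then have lt: "c1 < c2" using c12 by auto
      define t where "t = (x - c1) / (c2 - c1)"
      have t01: "0 \<le> t" "t \<le> 1" using that lt by (auto simp: t_def field_simps)
      have "p x = (1 - t) *\<^sub>R p c1 + t *\<^sub>R p c2"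
      proof -
        have tc: "t * (c2 - c1) = x - c1" using lt by (simp add: t_def)
        have "(1 - t) * c1 + t * c2 = c1 + t * (c2 - c1)" by (simp add: algebra_simps)
        then have "x = (1 - t) * c1 + t * c2" using tc by linarith
        then show ?thesis by (simp add: p_def algebra_simps) (metis scaleR_left_distrib scaleR_scaleR)
      qed
      moreover have "p c1 \<in> \<Omega>" "p c2 \<in> \<Omega>" using SI[OF c1S] SI[OF c2S] by (auto simp: C_def)
      ultimately have "p x \<in> \<Omega>" using cv t01 by (simp add: convex_alt)
      then show ?thesis by (simp add: C_def)
    qed
    define A where "A = C \<inter> {..c1}"
    define Bs where "Bs = C \<inter> {c2..}"
    define a where "a = (if A = {} then c1 - 1 else Sup A)"
    define b where "b = (if Bs = {} then c2 + 1 else Inf Bs)"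
    have Acl: "closed A" unfolding A_def using Cclosed by (intro closed_Int) auto
    have Bcl: "closed Bs" unfolding Bs_def using Cclosed by (intro closed_Int) auto
    have ac1: "a < c1"
    proof (cases "A = {}")
      case True then show ?thesis by (simp add: a_def)
    next
      case False
      have "Sup A \<in> A" by (rule closed_contains_Sup[OF False _ Acl]) (auto simp: A_def bdd_above_def)
      then have "Sup A \<le> c1" "Sup A \<in> C" by (auto simp: A_def)
      moreover have "c1 \<notin> C" using SI[OF c1S] .
      ultimately show ?thesis using False by (auto simp: a_def order.order_iff_strict)
    qed
    have c2b: "c2 < b"
    proof (cases "Bs = {}")
      case True then show ?thesis by (simp add: b_def)
    next
      case False
      have "Inf Bs \<in> Bs" by (rule closed_contains_Inf[OF False _ Bcl]) (auto simp: Bs_def bdd_below_def)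
      then have "c2 \<le> Inf Bs" "Inf Bs \<in> C" by (auto simp: Bs_def)
      moreover have "c2 \<notin> C" using SI[OF c2S] .
      ultimately show ?thesis using False by (auto simp: b_def order.order_iff_strict)
    qed
    have Csep: "x \<le> a \<or> b \<le> x" if "x \<in> C" for x
    proof -
      have "x < c1 \<or> c2 < x" using mid[of x] that by force
      then show ?thesis
      proof
        assume "x < c1"
        then have "x \<in> A" using that by (auto simp: A_def)
        then have "x \<le> Sup A" by (intro cSup_upper) (auto simp: A_def bdd_above_def)
        then show ?thesis using \<open>x \<in> A\<close> by (auto simp: a_def)
      next
        assume "c2 < x"
        then have "x \<in> Bs" using that by (auto simp: Bs_def)
        then have "Inf Bs \<le> x" by (intro cInf_lower) (auto simp: Bs_def bdd_below_def)
        then show ?thesis using \<open>x \<in> Bs\<close> by (auto simp: b_def)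
      qed
    qed
    have gz: "g s = 0" if "s < c1 \<or> c2 < s" for s
    proof -
      have "s \<notin> S" using that c1le c2ge by force
      then show ?thesis using K(3) by (auto simp: S_def g_def)
    qed
    have H: "(\<integral>\<^sup>+s. ennreal ((g s)\<^sup>2 / (4 * (infdist s C)\<^sup>2)) \<partial>lborel)
          \<le> (\<integral>\<^sup>+s. indicator {a<..<b} s * ennreal ((g' s)\<^sup>2) \<partial>lborel)"
      by (rule hardy_1d[OF dg cg' ac1 c12 c2b gz Csep])
    also have "\<dots> \<le> (\<integral>\<^sup>+s. indicator (- C) s * ennreal ((g' s)\<^sup>2) \<partial>lborel)"
    proof (rule nn_integral_mono)
      fix s
      have "s \<in> {a<..<b} \<Longrightarrow> s \<notin> C" using Csep by force
      then show "indicator {a<..<b} s * ennreal ((g' s)\<^sup>2) \<le> indicator (- C) s * ennreal ((g' s)\<^sup>2)"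
        by (auto simp: indicator_def)
    qed
    finally show ?thesis using LHS RHSeq unfolding p_def by simp
  qed
qed



lemma ball_infdist_frontier:
  fixes \<Omega> :: "'a::euclidean_space set"
  assumes "\<xi> \<in> \<Omega>"
  shows "ball \<xi> (infdist \<xi> (frontier \<Omega>)) \<subseteq> \<Omega>"
proof
  fix y assume y: "y \<in> ball \<xi> (infdist \<xi> (frontier \<Omega>))"
  show "y \<in> \<Omega>"
  proof (rule ccontr)
    assume "y \<notin> \<Omega>"
    have "closed_segment \<xi> y \<inter> frontier \<Omega> \<noteq> {}"
      by (rule connected_Int_frontier) (use assms \<open>y \<notin> \<Omega>\<close> in auto)
    then obtain z where z: "z \<in> closed_segment \<xi> y" "z \<in> frontier \<Omega>" by blast
    have "dist \<xi> z \<le> dist \<xi> y" using dist_in_closed_segment[OF z(1)] by (simp add: dist_commute)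
    moreover have "infdist \<xi> (frontier \<Omega>) \<le> dist \<xi> z" by (rule infdist_le[OF z(2)])
    ultimately show False using y by auto
  qed
qed

lemma unit_eq:
  fixes n v :: "'a::real_inner"
  assumes "norm n = 1" "norm v = 1" "1 \<le> n \<bullet> v"
  shows "n = v"
proof -
  have "(n - v) \<bullet> (n - v) = n \<bullet> n - 2 * (n \<bullet> v) + v \<bullet> v"
    by (simp add: inner_diff_left inner_diff_right inner_commute)
  also have "n \<bullet> n = 1" using assms(1) by (simp add: power2_norm_eq_inner[symmetric])
  also have "v \<bullet> v = 1" using assms(2) by (simp add: power2_norm_eq_inner[symmetric])
  finally have "(n - v) \<bullet> (n - v) \<le> 0" using assms(3) by simp
  then have "(n - v) \<bullet> (n - v) = 0" using inner_ge_zero[of "n - v"] by linarith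
  then show ?thesis by simp
qed

lemma halfspace:
  fixes \<Omega> :: "'a::euclidean_space set"
  assumes op: "open \<Omega>" and cv: "convex \<Omega>" and xi: "\<xi> \<in> \<Omega>" and fr: "\<xi>h \<in> frontier \<Omega>"
    and d: "dist \<xi> \<xi>h = infdist \<xi> (frontier \<Omega>)"
  shows "\<xi>h \<notin> \<Omega>" "\<xi> \<noteq> \<xi>h" "\<And>x. x \<in> \<Omega> \<Longrightarrow> (\<xi>h - \<xi>) \<bullet> (x - \<xi>h) \<le> 0"
proof -
  show nin: "\<xi>h \<notin> \<Omega>" using fr op by (auto simp: frontier_def interior_open)
  then show ne: "\<xi> \<noteq> \<xi>h" using xi by auto
  define w where "w = \<xi>h - \<xi>"
  have nw: "norm w = dist \<xi> \<xi>h" by (simp add: w_def dist_norm norm_minus_commute)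
  have wpos: "norm w > 0" using ne by (simp add: w_def)
  obtain a \<beta> where a: "a \<noteq> 0" "\<And>x. x \<in> \<Omega> \<Longrightarrow> a \<bullet> x \<le> \<beta>" "a \<bullet> \<xi>h \<ge> \<beta>"
    using separating_hyperplane_sets[OF cv convex_singleton, of \<xi>h] xi nin by auto
  define n where "n = a /\<^sub>R norm a"
  have nn: "norm n = 1" using a(1) by (simp add: n_def)
  have ball: "ball \<xi> (norm w) \<subseteq> \<Omega>" using ball_infdist_frontier[OF xi] d nw by simp
  have key: "n \<bullet> w \<ge> norm w"
  proof (rule ccontr)
    assume "\<not> norm w \<le> n \<bullet> w"
    then have lt: "n \<bullet> w < norm w" by simp
    define t where "t = (n \<bullet> w + norm w) / 2"
    have t: "n \<bullet> w < t" "t < norm w" using lt by (auto simp: t_def)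
    have "0 \<le> t"
    proof -
      have "\<bar>n \<bullet> w\<bar> \<le> norm w" using Cauchy_Schwarz_ineq2[of n w] nn by simp
      then have "- norm w \<le> n \<bullet> w" by (simp add: abs_le_iff)
      then show ?thesis using lt by (simp add: t_def)
    qed
    then have "\<xi> + t *\<^sub>R n \<in> ball \<xi> (norm w)" using t nn by (simp add: dist_norm)
    then have "\<xi> + t *\<^sub>R n \<in> \<Omega>" using ball by auto
    then have "a \<bullet> (\<xi> + t *\<^sub>R n) \<le> a \<bullet> \<xi>h" using a by force
    then have "(a \<bullet> (\<xi> + t *\<^sub>R n)) / norm a \<le> (a \<bullet> \<xi>h) / norm a" by (rule divide_right_mono) simp
    moreover have "\<And>z. n \<bullet> z = (a \<bullet> z) / norm a" by (simp add: n_def divide_inverse ac_simps)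
    ultimately have "n \<bullet> (\<xi> + t *\<^sub>R n) \<le> n \<bullet> \<xi>h" by simp
    then have "t \<le> n \<bullet> w" using nn by (simp add: w_def inner_simps dot_square_norm)
    then show False using t by simp
  qed
  have "n = w /\<^sub>R norm w"
  proof (rule unit_eq)
    show "norm n = 1" by (rule nn)
    show "norm (w /\<^sub>R norm w) = 1" using wpos by simp
    show "1 \<le> n \<bullet> (w /\<^sub>R norm w)" using key wpos by (simp add: field_simps)
  qed
  then have aw: "a = (norm a / norm w) *\<^sub>R w"
    using a(1) by (simp add: n_def) (metis divideR_right norm_eq_zero scaleR_scaleR mult.commute divide_inverse_commute)
  fix x assume "x \<in> \<Omega>"
  then have "a \<bullet> (x - \<xi>h) \<le> 0" using a by (force simp: inner_simps)
  moreover have "a \<bullet> (x - \<xi>h) = (norm a / norm w) * (w \<bullet> (x - \<xi>h))"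
    by (subst aw) (simp only: inner_scaleR_left)
  ultimately have h1: "(norm a / norm w) * (w \<bullet> (x - \<xi>h)) \<le> 0" by simp
  have h2: "norm a / norm w > 0" using a(1) wpos by simp
  have "w \<bullet> (x - \<xi>h) \<le> 0" using h1 h2 mult_pos_pos[of "norm a / norm w" "w \<bullet> (x - \<xi>h)"] by linarith
  then show "(\<xi>h - \<xi>) \<bullet> (x - \<xi>h) \<le> 0" unfolding w_def .
qed



lemma geom_bound:
  fixes \<Omega> :: "'a::euclidean_space set" and V :: "'a \<Rightarrow> 'a"
  assumes op: "open \<Omega>" and cv: "convex \<Omega>" and xi: "\<xi> \<in> \<Omega>" and fr: "\<xi>h \<in> frontier \<Omega>"
    and d: "dist \<xi> \<xi>h = infdist \<xi> (frontier \<Omega>)"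
    and nu: "\<nu> = (\<xi>h - \<xi>) /\<^sub>R norm (\<xi>h - \<xi>)"
  shows "(V \<xi> \<bullet> \<nu>)\<^sup>2 / (infdist \<xi> (frontier \<Omega>))\<^sup>2 \<le> 1 / (rhoV \<Omega> V \<xi>)\<^sup>2"
proof (cases "V \<xi> \<bullet> \<nu> = 0")
  case True then show ?thesis by simp
next
  case False
  note hs = halfspace[OF op cv xi fr d]
  define w where "w = \<xi>h - \<xi>"
  define D where "D = norm w"
  define v where "v = V \<xi>"
  have DD: "infdist \<xi> (frontier \<Omega>) = D" using d by (simp add: D_def w_def dist_norm norm_minus_commute)
  have Dpos: "D > 0" using hs(2) by (simp add: D_def w_def)
  have nuw: "\<nu> = w /\<^sub>R D" using nu by (simp add: w_def D_def)
  have wnu: "w \<bullet> \<nu> = D" using Dpos by (simp add: nuw D_def power2_norm_eq_inner[symmetric] power2_eq_square)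
  define s0 where "s0 = D / (v \<bullet> \<nu>)"
  define q where "q = \<xi> + s0 *\<^sub>R v"
  have vnu: "v \<bullet> \<nu> \<noteq> 0" using False by (simp add: v_def)
  have "w \<bullet> (q - \<xi>h) = 0"
  proof -
    have "w \<bullet> (q - \<xi>h) = D * (\<nu> \<bullet> (q - \<xi>h))" using Dpos by (simp add: nuw)
    also have "\<nu> \<bullet> (q - \<xi>h) = \<nu> \<bullet> (\<xi> - \<xi>h) + s0 * (v \<bullet> \<nu>)"
      by (simp add: q_def inner_simps inner_commute)
    also have "\<nu> \<bullet> (\<xi> - \<xi>h) = - D" proof -
      have "\<xi> - \<xi>h = - w" by (simp add: w_def)
      then show ?thesis using wnu by (simp add: inner_commute)
    qed
    also have "s0 * (v \<bullet> \<nu>) = D" using vnu by (simp add: s0_def)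
    finally show ?thesis by simp
  qed
  have qn: "q \<notin> \<Omega>"
  proof
    assume "q \<in> \<Omega>"
    then obtain e where e: "e > 0" "ball q e \<subseteq> \<Omega>" using op open_contains_ball by blast
    have nn: "norm \<nu> = 1" using Dpos by (simp add: nuw D_def)
    have "q + (e/2) *\<^sub>R \<nu> \<in> ball q e" using e nn by (simp add: dist_norm)
    then have "q + (e/2) *\<^sub>R \<nu> \<in> \<Omega>" using e by auto
    from hs(3)[OF this] have "w \<bullet> (q + (e/2) *\<^sub>R \<nu> - \<xi>h) \<le> 0" by (simp add: w_def)
    moreover have "w \<bullet> (q + (e/2) *\<^sub>R \<nu> - \<xi>h) = w \<bullet> (q - \<xi>h) + (e/2) * (w \<bullet> \<nu>)"
      by (simp add: inner_simps)
    ultimately have "e * D \<le> 0" using \<open>w \<bullet> (q - \<xi>h) = 0\<close> wnu by simp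
    then show False using Dpos e(1) by (simp add: mult_le_0_iff)
  qed
  define C where "C = {s. \<xi> + s *\<^sub>R V \<xi> \<notin> \<Omega>}"
  have rho: "rhoV \<Omega> V \<xi> = infdist 0 C" by (simp add: rhoV_def C_def)
  have s0C: "s0 \<in> C" using qn by (simp add: C_def q_def v_def)
  have Ccl: "closed C"
  proof -
    have pc: "continuous_on UNIV (\<lambda>s. \<xi> + s *\<^sub>R V \<xi>)" by (intro continuous_intros)
    have "closed ((\<lambda>s. \<xi> + s *\<^sub>R V \<xi>) -` (- \<Omega>))" using continuous_on_closed_vimage[of UNIV "\<lambda>s. \<xi> + s *\<^sub>R V \<xi>"] pc op by (auto simp: closed_def)
    moreover have "C = (\<lambda>s. \<xi> + s *\<^sub>R V \<xi>) -` (- \<Omega>)" by (auto simp: C_def)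
    ultimately show ?thesis by simp
  qed
  have rpos: "infdist 0 C > 0"
    by (rule infdist_pos_not_in_closed[OF Ccl]) (use s0C xi in \<open>auto simp: C_def\<close>)
  have rle: "infdist 0 C \<le> \<bar>s0\<bar>" using infdist_le[OF s0C, of 0] by simp
  have "infdist 0 C * \<bar>v \<bullet> \<nu>\<bar> \<le> D"
  proof -
    have "\<bar>s0\<bar> * \<bar>v \<bullet> \<nu>\<bar> = D" using vnu Dpos by (simp add: s0_def abs_div)
    then show ?thesis using rle mult_right_mono[OF rle, of "\<bar>v \<bullet> \<nu>\<bar>"] by simp
  qed
  then have "(infdist 0 C * \<bar>v \<bullet> \<nu>\<bar>)\<^sup>2 \<le> D\<^sup>2" using rpos by (intro power_mono) auto
  then have "(infdist 0 C)\<^sup>2 * (v \<bullet> \<nu>)\<^sup>2 \<le> D\<^sup>2" by (simp add: power_mult_distrib)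
  then show ?thesis using rpos Dpos unfolding rho DD v_def[symmetric]
    by (simp add: divide_le_eq le_divide_eq field_simps)
qed



lemma rhoV_measurable:
  fixes \<Omega> :: "'a::euclidean_space set" and V :: "'a \<Rightarrow> 'a"
  assumes op: "open \<Omega>" and Vc: "continuous_on UNIV V"
  shows "rhoV \<Omega> V \<in> borel_measurable borel"
proof (rule borel_measurableI_greater)
  fix y :: real
  define Z where "Z = {p :: real \<times> 'a. snd p + fst p *\<^sub>R V (snd p) \<in> - \<Omega>}"
  have Zc: "closed Z"
  proof -
    have c: "continuous_on UNIV (\<lambda>p :: real \<times> 'a. snd p + fst p *\<^sub>R V (snd p))"
      by (intro continuous_intros continuous_on_compose2[OF Vc]) auto
    have "closed ((\<lambda>p :: real \<times> 'a. snd p + fst p *\<^sub>R V (snd p)) -` (- \<Omega>))"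
      using continuous_on_closed_vimage[of UNIV "\<lambda>p :: real \<times> 'a. snd p + fst p *\<^sub>R V (snd p)"] c op
      by (auto simp: closed_def)
    then show ?thesis by (simp add: Z_def vimage_def)
  qed
  define E where "E r = {\<xi>. \<exists>s. s \<in> {-r..r} \<and> (s, \<xi>) \<in> Z}" for r :: real
  have Ec: "closed (E r)" for r unfolding E_def by (rule closed_compact_projection[OF compact_Icc Zc])
  define C where "C \<xi> = {s. \<xi> + s *\<^sub>R V \<xi> \<notin> \<Omega>}" for \<xi>
  have rho: "rhoV \<Omega> V \<xi> = infdist 0 (C \<xi>)" for \<xi> by (simp add: rhoV_def C_def)
  have EC: "\<xi> \<in> E r \<longleftrightarrow> (\<exists>s\<in>C \<xi>. \<bar>s\<bar> \<le> r)" for \<xi> r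
    by (auto simp: E_def Z_def C_def abs_le_iff) (metis minus_le_iff)
  show "{x \<in> space borel. y < rhoV \<Omega> V x} \<in> sets borel"
  proof (cases "y < 0")
    case True
    then have "{x \<in> space borel. y < rhoV \<Omega> V x} = UNIV"
      using infdist_nonneg by (auto simp: rho intro: less_le_trans)
    then show ?thesis by simp
  next
    case False
    have eq: "{x \<in> space borel. y < rhoV \<Omega> V x}
        = (\<Union>n::nat. E (real n)) \<inter> (\<Union>r\<in>{r\<in>\<rat>. y < r}. - E r)"
    proof (intro set_eqI iffI)
      fix \<xi> assume "\<xi> \<in> {x \<in> space borel. y < rhoV \<Omega> V x}"
      then have lt: "y < infdist 0 (C \<xi>)" by (simp add: rho)
      then have ne: "C \<xi> \<noteq> {}" using False by (auto simp: infdist_def)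
      then obtain s where s: "s \<in> C \<xi>" by auto
      obtain n :: nat where "\<bar>s\<bar> \<le> real n" using real_arch_simple by blast
      then have "\<xi> \<in> (\<Union>n::nat. E (real n))" using s EC by blast
      moreover obtain r where r: "r \<in> \<rat>" "y < r" "r < infdist 0 (C \<xi>)" using Rats_dense_in_real[OF lt] by blast
      have "\<xi> \<notin> E r"
      proof
        assume "\<xi> \<in> E r"
        then obtain t where "t \<in> C \<xi>" "\<bar>t\<bar> \<le> r" using EC by blast
        then have "infdist 0 (C \<xi>) \<le> r" using infdist_le[of t "C \<xi>" 0] by simp
        then show False using r by simp
      qed
      ultimately show "\<xi> \<in> (\<Union>n::nat. E (real n)) \<inter> (\<Union>r\<in>{r\<in>\<rat>. y < r}. - E r)" using r by blast
    next
      fix \<xi> assume "\<xi> \<in> (\<Union>n::nat. E (real n)) \<inter> (\<Union>r\<in>{r\<in>\<rat>. y < r}. - E r)"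
      then obtain n :: nat and r where n: "\<xi> \<in> E (real n)" and r: "y < r" "\<xi> \<notin> E r" by blast
      have ne: "C \<xi> \<noteq> {}" using n EC by blast
      have "r \<le> infdist 0 (C \<xi>)"
      proof (rule infdist_ge_lb[OF ne])
        fix t assume "t \<in> C \<xi>"
        then have "\<not> \<bar>t\<bar> \<le> r" using r(2) EC by blast
        then show "r \<le> dist 0 t" by simp
      qed
      then show "\<xi> \<in> {x \<in> space borel. y < rhoV \<Omega> V x}" using r by (simp add: rho)
    qed
    have "(\<Union>n::nat. E (real n)) \<in> sets borel" using Ec by (auto intro!: sets.countable_UN)
    moreover have "(\<Union>r\<in>{r\<in>\<rat>. y < r}. - E r) \<in> sets borel"
      by (rule sets.countable_UN'') (auto intro: countable_subset[OF _ countable_rat] borel_open simp: open_Compl Ec)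
    ultimately show ?thesis unfolding eq by blast
  qed
qed



lemma direction_bound:
  fixes \<Omega> :: "'a::euclidean_space set" and V :: "'a \<Rightarrow> 'a" and u :: "'a \<Rightarrow> real" and Du :: "'a \<Rightarrow> 'a \<Rightarrow> real"
    and c :: "'a \<Rightarrow> real"
  assumes op: "open \<Omega>" and cv: "convex \<Omega>"
    and du: "\<And>\<xi>. (u has_derivative Du \<xi>) (at \<xi>)"
    and cDV: "continuous_on UNIV (\<lambda>\<xi>. Du \<xi> (V \<xi>))"
    and Vc: "continuous_on UNIV V"
    and Vinv: "\<And>\<xi> s. V (\<xi> + s *\<^sub>R V \<xi>) = V \<xi>"
    and Vne: "\<And>\<xi>. V \<xi> \<noteq> 0"
    and K: "compact K" "K \<subseteq> \<Omega>" "\<And>\<xi>. \<xi> \<notin> K \<Longrightarrow> u \<xi> = 0"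
    and cc: "continuous_on UNIV c"
    and cs: "\<And>\<xi> s. c (\<xi> + s *\<^sub>R V \<xi>) = c \<xi> + s"
    and pres: "\<And>s G. G \<in> borel_measurable borel \<Longrightarrow> (\<integral>\<^sup>+\<xi>. G (\<xi> + s *\<^sub>R V \<xi>) \<partial>lborel) = (\<integral>\<^sup>+\<xi>. G \<xi> \<partial>lborel)"
  shows "(\<integral>\<^sup>+\<xi>. indicator \<Omega> \<xi> * ennreal ((u \<xi>)\<^sup>2 / (4 * (rhoV \<Omega> V \<xi>)\<^sup>2)) \<partial>lborel)
       \<le> (\<integral>\<^sup>+\<xi>. indicator \<Omega> \<xi> * ennreal ((Du \<xi> (V \<xi>))\<^sup>2) \<partial>lborel)"
proof (rule line_compare[OF Vc cc cs pres])
  have uc: "continuous_on UNIV u"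
    using du by (meson differentiableI differentiable_at_imp_differentiable_on differentiable_imp_continuous_on)
  have [measurable]: "u \<in> borel_measurable borel" by (rule borel_measurable_continuous_onI[OF uc])
  have [measurable]: "(\<lambda>\<xi>. Du \<xi> (V \<xi>)) \<in> borel_measurable borel" by (rule borel_measurable_continuous_onI[OF cDV])
  have [measurable]: "rhoV \<Omega> V \<in> borel_measurable borel" by (rule rhoV_measurable[OF op Vc])
  have [measurable]: "\<Omega> \<in> sets borel" using op by simp
  show "(\<lambda>\<xi>. indicator \<Omega> \<xi> * ennreal ((u \<xi>)\<^sup>2 / (4 * (rhoV \<Omega> V \<xi>)\<^sup>2))) \<in> borel_measurable borel"
    by measurable
  show "(\<lambda>\<xi>. indicator \<Omega> \<xi> * ennreal ((Du \<xi> (V \<xi>))\<^sup>2)) \<in> borel_measurable borel"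
    by measurable
  fix w
  show "(\<integral>\<^sup>+s. indicator \<Omega> (w + s *\<^sub>R V w) * ennreal ((u (w + s *\<^sub>R V w))\<^sup>2 / (4 * (rhoV \<Omega> V (w + s *\<^sub>R V w))\<^sup>2)) \<partial>lborel)
       \<le> (\<integral>\<^sup>+s. indicator \<Omega> (w + s *\<^sub>R V w) * ennreal ((Du (w + s *\<^sub>R V w) (V (w + s *\<^sub>R V w)))\<^sup>2) \<partial>lborel)"
    by (rule line_hardy[OF op cv du cDV Vinv Vne K])
qed



lemma smooth_fun_D:
  assumes "smooth_fun f"
  shows "\<And>x. f differentiable (at x)" "\<And>b. b \<in> Basis \<Longrightarrow> smooth_fun (\<lambda>x. frechet_derivative f (at x) b)"
  using assms by (auto elim: smooth_fun.cases)

lemma smooth_fun_cont: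
  assumes "smooth_fun f" shows "continuous_on UNIV f"
  using smooth_fun_D(1)[OF assms]
  by (meson differentiable_at_imp_differentiable_on differentiable_imp_continuous_on)

lemma cont_DV:
  fixes V :: "'a::euclidean_space \<Rightarrow> 'a" and Du :: "'a \<Rightarrow> 'a \<Rightarrow> real"
  assumes lin: "\<And>\<xi>. linear (Du \<xi>)"
    and pc: "\<And>b. b \<in> Basis \<Longrightarrow> continuous_on UNIV (\<lambda>\<xi>. Du \<xi> b)"
    and Vc: "continuous_on UNIV V"
  shows "continuous_on UNIV (\<lambda>\<xi>. Du \<xi> (V \<xi>))"
proof -
  have "Du \<xi> (V \<xi>) = (\<Sum>b\<in>Basis. (V \<xi> \<bullet> b) * Du \<xi> b)" for \<xi>
    using Linear_Algebra.linear_componentwise[OF lin[of \<xi>], of "V \<xi>" 1] by simp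
  moreover have "continuous_on UNIV (\<lambda>\<xi>. \<Sum>b\<in>Basis. (V \<xi> \<bullet> b) * Du \<xi> b)"
    by (intro continuous_on_sum continuous_intros pc continuous_on_compose2[OF Vc]) auto
  ultimately show ?thesis by simp
qed

lemma Xf_cont: "continuous_on UNIV (Xf i)"
proof -
  have "Xf i = (\<lambda>p. (axis i 1, 0, 2 * fst (snd p) $ i))" by (auto simp: Xf_def fun_eq_iff split: prod.splits)
  then show ?thesis by (simp add: continuous_intros)
qed

lemma Yf_cont: "continuous_on UNIV (Yf i)"
proof -
  have "Yf i = (\<lambda>p. (0, axis i 1, - 2 * fst p $ i))" by (auto simp: Yf_def fun_eq_iff split: prod.splits)
  then show ?thesis by (simp add: continuous_intros)
qed

lemma Xf_inv: "Xf i (\<xi> + s *\<^sub>R Xf i \<xi>) = Xf i \<xi>"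
  by (cases \<xi>) (simp add: Xf_def)
lemma Yf_inv: "Yf i (\<xi> + s *\<^sub>R Yf i \<xi>) = Yf i \<xi>"
  by (cases \<xi>) (simp add: Yf_def)

lemma axis_ne0: "axis i (1::real) \<noteq> 0"
  by (metis axis_nth zero_index zero_neq_one)

lemma Xf_ne: "Xf i \<xi> \<noteq> 0"
  using axis_ne0[of i] by (cases \<xi>) (simp add: Xf_def zero_prod_def)
lemma Yf_ne: "Yf i \<xi> \<noteq> 0"
  using axis_ne0[of i] by (cases \<xi>) (simp add: Yf_def zero_prod_def)

lemma Xf_c: "fst (\<xi> + s *\<^sub>R Xf i \<xi>) $ i = fst \<xi> $ i + s"
  by (cases \<xi>) (simp add: Xf_def axis_def)
lemma Yf_c: "fst (snd (\<xi> + s *\<^sub>R Yf i \<xi>)) $ i = fst (snd \<xi>) $ i + s"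
  by (cases \<xi>) (simp add: Yf_def axis_def)

lemma cX: "continuous_on UNIV (\<lambda>\<xi>::'n::finite hpt. fst \<xi> $ i)" by (intro continuous_intros)
lemma cY: "continuous_on UNIV (\<lambda>\<xi>::'n::finite hpt. fst (snd \<xi>) $ i)" by (intro continuous_intros)



theorem theorem3p1:
  fixes \<Omega> :: "'n::finite hpt set"
    and \<nu> :: "'n hpt \<Rightarrow> 'n hpt"
    and u :: "'n hpt \<Rightarrow> real"
  assumes "open \<Omega>" and "convex \<Omega>" and "\<Omega> \<noteq> {}" and "\<Omega> \<noteq> UNIV"
    and nu: "\<And>\<xi>. \<xi> \<in> \<Omega> \<Longrightarrow> \<exists>\<xi>h \<in> frontier \<Omega>.
               dist \<xi> \<xi>h = infdist \<xi> (frontier \<Omega>) \<and> \<nu> \<xi> = (\<xi>h - \<xi>) /\<^sub>R norm (\<xi>h - \<xi>)"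
    and "C0_inf \<Omega> u"
  shows "(\<integral>\<^sup>+\<xi>\<in>\<Omega>. ennreal (hgrad_sq u \<xi>) \<partial>lebesgue)
     \<ge> (\<integral>\<^sup>+\<xi>\<in>\<Omega>. ennreal ((1/4) * (\<Sum>i\<in>UNIV. (Xf i \<xi> \<bullet> \<nu> \<xi>)\<^sup>2 + (Yf i \<xi> \<bullet> \<nu> \<xi>)\<^sup>2)
                         / (infdist \<xi> (frontier \<Omega>))\<^sup>2 * (u \<xi>)\<^sup>2) \<partial>lebesgue)"
proof -
  note op = assms(1) and cv = assms(2)
  define K where "K = closure {x. u x \<noteq> 0}"
  have sm: "smooth_fun u" and Kc: "compact K" and KO: "K \<subseteq> \<Omega>"
    using assms(6) by (auto simp: C0_inf_def K_def)
  have Kz: "u \<xi> = 0" if "\<xi> \<notin> K" for \<xi>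
    using that closure_subset[of "{x. u x \<noteq> 0}"] unfolding K_def by blast
  define Du where "Du \<xi> = frechet_derivative u (at \<xi>)" for \<xi>
  have du: "(u has_derivative Du \<xi>) (at \<xi>)" for \<xi>
    unfolding Du_def using smooth_fun_D(1)[OF sm, of \<xi>] frechet_derivative_works by blast
  have lin: "linear (Du \<xi>)" for \<xi> using du has_derivative_linear by blast
  have pc: "continuous_on UNIV (\<lambda>\<xi>. Du \<xi> b)" if "b \<in> Basis" for b
    using smooth_fun_cont[OF smooth_fun_D(2)[OF sm that]] by (simp add: Du_def)
  have uc: "continuous_on UNIV u" by (rule smooth_fun_cont[OF sm])
  have [measurable]: "u \<in> borel_measurable borel" by (rule borel_measurable_continuous_onI[OF uc])
  have [measurable]: "\<Omega> \<in> sets borel" using op by simp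
  define FX where "FX i \<xi> = indicator \<Omega> \<xi> * ennreal ((u \<xi>)\<^sup>2 / (4 * (rhoV \<Omega> (Xf i) \<xi>)\<^sup>2))" for i \<xi>
  define FY where "FY i \<xi> = indicator \<Omega> \<xi> * ennreal ((u \<xi>)\<^sup>2 / (4 * (rhoV \<Omega> (Yf i) \<xi>)\<^sup>2))" for i \<xi>
  define LX where "LX i \<xi> = indicator \<Omega> \<xi> * ennreal ((Du \<xi> (Xf i \<xi>))\<^sup>2)" for i \<xi>
  define LY where "LY i \<xi> = indicator \<Omega> \<xi> * ennreal ((Du \<xi> (Yf i \<xi>))\<^sup>2)" for i \<xi>
  have cDX: "continuous_on UNIV (\<lambda>\<xi>. Du \<xi> (Xf i \<xi>))" for i by (rule cont_DV[OF lin pc Xf_cont])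
  have cDY: "continuous_on UNIV (\<lambda>\<xi>. Du \<xi> (Yf i \<xi>))" for i by (rule cont_DV[OF lin pc Yf_cont])
  have mFX[measurable]: "FX i \<in> borel_measurable borel" for i
  proof -
    have [measurable]: "rhoV \<Omega> (Xf i) \<in> borel_measurable borel" by (rule rhoV_measurable[OF op Xf_cont])
    show ?thesis unfolding FX_def[abs_def] by measurable
  qed
  have mFY[measurable]: "FY i \<in> borel_measurable borel" for i
  proof -
    have [measurable]: "rhoV \<Omega> (Yf i) \<in> borel_measurable borel" by (rule rhoV_measurable[OF op Yf_cont])
    show ?thesis unfolding FY_def[abs_def] by measurable
  qed
  have mLX[measurable]: "LX i \<in> borel_measurable borel" for i
  proof -
    have [measurable]: "(\<lambda>\<xi>. Du \<xi> (Xf i \<xi>)) \<in> borel_measurable borel" by (rule borel_measurable_continuous_onI[OF cDX])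
    show ?thesis unfolding LX_def[abs_def] by measurable
  qed
  have mLY[measurable]: "LY i \<in> borel_measurable borel" for i
  proof -
    have [measurable]: "(\<lambda>\<xi>. Du \<xi> (Yf i \<xi>)) \<in> borel_measurable borel" by (rule borel_measurable_continuous_onI[OF cDY])
    show ?thesis unfolding LY_def[abs_def] by measurable
  qed
  have bX: "integral\<^sup>N lborel (FX i) \<le> integral\<^sup>N lborel (LX i)" for i
    unfolding FX_def LX_def
    by (rule direction_bound[OF op cv du cDX Xf_cont Xf_inv Xf_ne Kc KO Kz cX Xf_c presX])
  have bY: "integral\<^sup>N lborel (FY i) \<le> integral\<^sup>N lborel (LY i)" for i
    unfolding FY_def LY_def
    by (rule direction_bound[OF op cv du cDY Yf_cont Yf_inv Yf_ne Kc KO Kz cY Yf_c presY])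
  define T where "T \<xi> = (1/4) * (\<Sum>i\<in>UNIV. (Xf i \<xi> \<bullet> \<nu> \<xi>)\<^sup>2 + (Yf i \<xi> \<bullet> \<nu> \<xi>)\<^sup>2)
                         / (infdist \<xi> (frontier \<Omega>))\<^sup>2 * (u \<xi>)\<^sup>2" for \<xi>
  have pw: "ennreal (T \<xi>) * indicator \<Omega> \<xi> \<le> (\<Sum>i\<in>UNIV. FX i \<xi> + FY i \<xi>)" for \<xi>
  proof (cases "\<xi> \<in> \<Omega>")
    case False then show ?thesis by simp
  next
    case True
    then obtain \<xi>h where h: "\<xi>h \<in> frontier \<Omega>" "dist \<xi> \<xi>h = infdist \<xi> (frontier \<Omega>)"
      "\<nu> \<xi> = (\<xi>h - \<xi>) /\<^sub>R norm (\<xi>h - \<xi>)" using nu by blast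
    define d where "d = infdist \<xi> (frontier \<Omega>)"
    define q where "q = (u \<xi>)\<^sup>2 / 4"
    have q0: "q \<ge> 0" by (simp add: q_def)
    have gX: "(Xf i \<xi> \<bullet> \<nu> \<xi>)\<^sup>2 / d\<^sup>2 \<le> 1 / (rhoV \<Omega> (Xf i) \<xi>)\<^sup>2" for i
      unfolding d_def by (rule geom_bound[OF op cv True h])
    have gY: "(Yf i \<xi> \<bullet> \<nu> \<xi>)\<^sup>2 / d\<^sup>2 \<le> 1 / (rhoV \<Omega> (Yf i) \<xi>)\<^sup>2" for i
      unfolding d_def by (rule geom_bound[OF op cv True h])
    have "T \<xi> = (\<Sum>i\<in>UNIV. (Xf i \<xi> \<bullet> \<nu> \<xi>)\<^sup>2 / d\<^sup>2 * q + (Yf i \<xi> \<bullet> \<nu> \<xi>)\<^sup>2 / d\<^sup>2 * q)"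
    proof -
      have "(\<Sum>i\<in>UNIV. (Xf i \<xi> \<bullet> \<nu> \<xi>)\<^sup>2 / d\<^sup>2 * q + (Yf i \<xi> \<bullet> \<nu> \<xi>)\<^sup>2 / d\<^sup>2 * q)
          = (\<Sum>i\<in>UNIV. ((Xf i \<xi> \<bullet> \<nu> \<xi>)\<^sup>2 + (Yf i \<xi> \<bullet> \<nu> \<xi>)\<^sup>2) / d\<^sup>2 * q)"
        by (intro sum.cong) (auto simp: add_divide_distrib distrib_right)
      also have "\<dots> = (\<Sum>i\<in>UNIV. (Xf i \<xi> \<bullet> \<nu> \<xi>)\<^sup>2 + (Yf i \<xi> \<bullet> \<nu> \<xi>)\<^sup>2) / d\<^sup>2 * q"
        by (simp add: sum_distrib_right sum_divide_distrib)
      finally show ?thesis by (simp add: T_def d_def q_def)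
    qed
    also have "\<dots> \<le> (\<Sum>i\<in>UNIV. (u \<xi>)\<^sup>2 / (4 * (rhoV \<Omega> (Xf i) \<xi>)\<^sup>2) + (u \<xi>)\<^sup>2 / (4 * (rhoV \<Omega> (Yf i) \<xi>)\<^sup>2))"
    proof (rule sum_mono, rule add_mono)
      fix i
      show "(Xf i \<xi> \<bullet> \<nu> \<xi>)\<^sup>2 / d\<^sup>2 * q \<le> (u \<xi>)\<^sup>2 / (4 * (rhoV \<Omega> (Xf i) \<xi>)\<^sup>2)"
        using mult_right_mono[OF gX[of i] q0] by (simp add: q_def)
      show "(Yf i \<xi> \<bullet> \<nu> \<xi>)\<^sup>2 / d\<^sup>2 * q \<le> (u \<xi>)\<^sup>2 / (4 * (rhoV \<Omega> (Yf i) \<xi>)\<^sup>2)"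
        using mult_right_mono[OF gY[of i] q0] by (simp add: q_def)
    qed
    finally have "ennreal (T \<xi>) \<le> ennreal (\<Sum>i\<in>UNIV. (u \<xi>)\<^sup>2 / (4 * (rhoV \<Omega> (Xf i) \<xi>)\<^sup>2) + (u \<xi>)\<^sup>2 / (4 * (rhoV \<Omega> (Yf i) \<xi>)\<^sup>2))"
      by (rule ennreal_leI)
    also have "\<dots> = (\<Sum>i\<in>UNIV. FX i \<xi> + FY i \<xi>)"
      using True by (subst sum_ennreal[symmetric]) (auto simp: FX_def FY_def ennreal_plus)
    finally show ?thesis using True by simp
  qed
  have pw2: "ennreal (hgrad_sq u \<xi>) * indicator \<Omega> \<xi> = (\<Sum>i\<in>UNIV. LX i \<xi> + LY i \<xi>)" for \<xi>
    by (cases "\<xi> \<in> \<Omega>") (auto simp: hgrad_sq_def LX_def LY_def Du_def ennreal_plus sum_ennreal[symmetric])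
  have "(\<integral>\<^sup>+\<xi>\<in>\<Omega>. ennreal (T \<xi>) \<partial>lebesgue) = (\<integral>\<^sup>+\<xi>. ennreal (T \<xi>) * indicator \<Omega> \<xi> \<partial>lborel)"
    by (simp add: nn_integral_completion)
  also have "\<dots> \<le> (\<integral>\<^sup>+\<xi>. (\<Sum>i\<in>UNIV. FX i \<xi> + FY i \<xi>) \<partial>lborel)"
    by (rule nn_integral_mono) (rule pw)
  also have "\<dots> = (\<Sum>i\<in>UNIV. integral\<^sup>N lborel (FX i) + integral\<^sup>N lborel (FY i))"
    by (subst nn_integral_sum) (auto simp: nn_integral_add)
  also have "\<dots> \<le> (\<Sum>i\<in>UNIV. integral\<^sup>N lborel (LX i) + integral\<^sup>N lborel (LY i))"
    by (intro sum_mono add_mono bX bY)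
  also have "\<dots> = (\<integral>\<^sup>+\<xi>. (\<Sum>i\<in>UNIV. LX i \<xi> + LY i \<xi>) \<partial>lborel)"
    by (subst nn_integral_sum) (auto simp: nn_integral_add)
  also have "\<dots> = (\<integral>\<^sup>+\<xi>\<in>\<Omega>. ennreal (hgrad_sq u \<xi>) \<partial>lebesgue)"
    by (simp add: nn_integral_completion pw2)
  finally show ?thesis unfolding T_def .
qed


end
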